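(* Let $\vec a=(a_1,\dots,a_n)\in\mathbb R^n_{>0}$, $\Sigma=\partial E(\vec a)$ and $Z=Z_{\vec a}:=2\pi\sum_{j=1}^n\frac1{a_j}(x_j\partial_{x_j}+y_j\partial_{y_j})$. Let $\alpha=\lambda_{std}|_\Sigma$ and let $\beta$ be the one-form on $\Sigma$ with $\ker\beta=T\Sigma\cap iT\Sigma$ and $\beta(iZ)=1$. Then there is a diffeomorphism $G:\partial E(\vec a)\to\partial E(\vec a)$ such that $G^*\alpha=\beta$.
   Context: $E(\vec a)=\{z\in\mathbb C^n:\pi\sum_j|z_j|^2/a_j\le1\}$, $z_j=x_j+iy_j$, $\lambda_{std}=\frac12\sum_j(x_jdy_j-y_jdx_j)$, and $i$ is the standard complex structure. *)

theory Defs
  imports "HOL-Analysis.Analysis"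
begin

fun Ck_on :: "nat \<Rightarrow> ('a::euclidean_space) set \<Rightarrow> ('a \<Rightarrow> 'b::euclidean_space) \<Rightarrow> bool" where
  "Ck_on 0 U f = continuous_on U f"
| "Ck_on (Suc k) U f = (f differentiable_on U \<and>
       (\<forall>v. Ck_on k U (\<lambda>x. frechet_derivative f (at x) v)))"

definition smooth_on :: "('a::euclidean_space) set \<Rightarrow> ('a \<Rightarrow> 'b::euclidean_space) \<Rightarrow> bool" where
  "smooth_on U f \<longleftrightarrow> open U \<and> (\<forall>k. Ck_on k U f)"

definition smooth_map_on :: "('a::euclidean_space) set \<Rightarrow> ('a \<Rightarrow> 'b::euclidean_space) \<Rightarrow> bool" where
  "smooth_map_on S g \<longleftrightarrow> (\<exists>U F. S \<subseteq> U \<and> smooth_on U F \<and> (\<forall>x\<in>S. F x = g x))"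

definition diffeo_on :: "('a::euclidean_space) set \<Rightarrow> ('a \<Rightarrow> 'a) \<Rightarrow> bool" where
  "diffeo_on S g \<longleftrightarrow> bij_betw g S S \<and> smooth_map_on S g \<and> smooth_map_on S (inv_into S g)"

definition tangent_space :: "('a::euclidean_space) set \<Rightarrow> 'a \<Rightarrow> 'a set" where
  "tangent_space S p = {v. \<exists>\<gamma>. (\<forall>t. \<gamma> t \<in> S) \<and> \<gamma> 0 = p \<and> (\<gamma> has_vector_derivative v) (at 0)}"

definition ellipsoid_boundary :: "real ^ 'n \<Rightarrow> (complex ^ 'n) set" where
  "ellipsoid_boundary a = {z. pi * (\<Sum>j\<in>UNIV. (cmod (z $ j))\<^sup>2 / a $ j) = 1}"

text \<open>lambda_std = 1/2 sum (x_j dy_j - y_j dx_j), evaluated at z on the vector w.\<close>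
definition lambda_std :: "complex ^ 'n \<Rightarrow> complex ^ 'n \<Rightarrow> real" where
  "lambda_std z w = (1/2) * (\<Sum>j\<in>UNIV. Re (z $ j) * Im (w $ j) - Im (z $ j) * Re (w $ j))"

definition Zfield :: "real ^ 'n \<Rightarrow> complex ^ 'n \<Rightarrow> complex ^ 'n" where
  "Zfield a z = (\<chi> j. complex_of_real (2 * pi / a $ j) * z $ j)"

definition cx_i :: "complex ^ 'n \<Rightarrow> complex ^ 'n" where
  "cx_i v = (\<chi> j. \<i> * v $ j)"

definition linear_on_subspace :: "('a::real_vector) set \<Rightarrow> ('a \<Rightarrow> real) \<Rightarrow> bool" where
  "linear_on_subspace V f \<longleftrightarrow>
     (\<forall>u\<in>V. \<forall>v\<in>V. f (u + v) = f u + f v) \<and> (\<forall>c. \<forall>u\<in>V. f (c *\<^sub>R u) = c * f u)"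

end

theory Submission
  imports Defs
begin

lemma hd_cong:
  assumes "open U" "\<And>x. x \<in> U \<Longrightarrow> f x = g x" "x \<in> U"
  shows "(f has_derivative D) (at x) \<longleftrightarrow> (g has_derivative D) (at x)"
proof
  assume "(f has_derivative D) (at x)"
  then show "(g has_derivative D) (at x)"
    by (rule has_derivative_transform_within_open[OF _ assms(1) assms(3)]) (rule assms(2))
next
  assume "(g has_derivative D) (at x)"
  then show "(f has_derivative D) (at x)"
    by (rule has_derivative_transform_within_open[OF _ assms(1) assms(3)]) (rule assms(2)[symmetric])
qed

lemma Ck_on_cong:
  assumes "open U" "\<And>x. x \<in> U \<Longrightarrow> f x = g x"
  shows "Ck_on k U f = Ck_on k U g"
  using assms(2)
proof (induction k arbitrary: f g)
  case 0
  have "continuous_on U f = continuous_on U g" by (rule continuous_on_cong[OF refl]) (rule 0)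
  then show ?case by simp
next
  case (Suc k)
  have hd: "(f has_derivative D) (at x) \<longleftrightarrow> (g has_derivative D) (at x)" if "x \<in> U" for x D
    by (rule hd_cong[OF assms(1) Suc.prems that])
  have da: "f differentiable at x \<longleftrightarrow> g differentiable at x" if "x \<in> U" for x
    unfolding differentiable_def using hd[OF that] by simp
  have d: "f differentiable_on U \<longleftrightarrow> g differentiable_on U"
    unfolding differentiable_on_def using da at_within_open[OF _ assms(1)] by simp
  have fd: "frechet_derivative f (at x) = frechet_derivative g (at x)" if "x \<in> U" for x
    unfolding frechet_derivative_def using hd[OF that] by simp
  have e: "Ck_on k U (\<lambda>x. frechet_derivative f (at x) v) = Ck_on k U (\<lambda>x. frechet_derivative g (at x) v)" for v
    by (rule Suc.IH) (simp add: fd)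
  show ?case
    unfolding Ck_on.simps using d e by simp
qed

lemma Ck_coind:
  assumes "open U" "f \<in> C"
    and step: "\<And>g. g \<in> C \<Longrightarrow> g differentiable_on U \<and>
        (\<forall>v. \<exists>h\<in>C. \<forall>x\<in>U. frechet_derivative g (at x) v = h x)"
  shows "Ck_on k U f"
  using assms(2)
proof (induction k arbitrary: f)
  case 0
  have "f differentiable_on U" using step[OF 0] by blast
  then have "continuous_on U f" by (rule differentiable_imp_continuous_on)
  then show ?case by simp
next
  case (Suc k)
  have "Ck_on k U (\<lambda>x. frechet_derivative f (at x) v)" for v
  proof -
    obtain h where h: "h \<in> C" "\<forall>x\<in>U. frechet_derivative f (at x) v = h x"
      using step[OF Suc.prems] by blast
    have e: "Ck_on k U (\<lambda>x. frechet_derivative f (at x) v) = Ck_on k U h"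
      by (rule Ck_on_cong[OF assms(1)]) (use h(2) in simp)
    show ?thesis using e Suc.IH[OF h(1)] by simp
  qed
  moreover have "f differentiable_on U" using step[OF Suc.prems] by blast
  ultimately show ?case by simp
qed

inductive_set Creal :: "'a set \<Rightarrow> ('a::real_normed_vector \<Rightarrow> real) set" for U where
  const: "(\<lambda>x. c) \<in> Creal U"
| lin: "bounded_linear L \<Longrightarrow> L \<in> Creal U"
| add: "f \<in> Creal U \<Longrightarrow> g \<in> Creal U \<Longrightarrow> (\<lambda>x. f x + g x) \<in> Creal U"
| mult: "f \<in> Creal U \<Longrightarrow> g \<in> Creal U \<Longrightarrow> (\<lambda>x. f x * g x) \<in> Creal U"
| pow: "f \<in> Creal U \<Longrightarrow> (\<forall>x\<in>U. f x > 0) \<Longrightarrow> (\<lambda>x. f x powr r) \<in> Creal U"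

lemma Creal_deriv:
  assumes "f \<in> Creal U"
  shows "\<exists>D. (\<forall>x\<in>U. (f has_derivative D x) (at x)) \<and> (\<forall>v. (\<lambda>x. D x v) \<in> Creal U)"
  using assms
proof (induction rule: Creal.induct)
  case (const c)
  show ?case
  proof (rule exI[of _ "\<lambda>x v. 0"], intro conjI ballI allI)
    fix x show "((\<lambda>x. c) has_derivative (\<lambda>v. 0)) (at x)" by (rule has_derivative_const)
  next
    fix v show "(\<lambda>x. 0) \<in> Creal U" by (rule Creal.const)
  qed
next
  case (lin L)
  show ?case
  proof (rule exI[of _ "\<lambda>x. L"], intro conjI ballI allI)
    fix x show "(L has_derivative L) (at x)" by (rule bounded_linear_imp_has_derivative[OF lin.hyps])
  next
    fix v show "(\<lambda>x. L v) \<in> Creal U" by (rule Creal.const)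
  qed
next
  case (add f g)
  then obtain Df Dg where f: "\<forall>x\<in>U. (f has_derivative Df x) (at x)" "\<forall>v. (\<lambda>x. Df x v) \<in> Creal U"
    and g: "\<forall>x\<in>U. (g has_derivative Dg x) (at x)" "\<forall>v. (\<lambda>x. Dg x v) \<in> Creal U" by blast
  show ?case
  proof (rule exI[of _ "\<lambda>x v. Df x v + Dg x v"], intro conjI ballI allI)
    fix x assume x: "x \<in> U"
    show "((\<lambda>x. f x + g x) has_derivative (\<lambda>v. Df x v + Dg x v)) (at x)"
      by (rule has_derivative_add[OF f(1)[rule_format, OF x] g(1)[rule_format, OF x]])
  next
    fix v show "(\<lambda>x. Df x v + Dg x v) \<in> Creal U"
      by (rule Creal.add[OF f(2)[rule_format] g(2)[rule_format]])
  qed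
next
  case (mult f g)
  then obtain Df Dg where f: "\<forall>x\<in>U. (f has_derivative Df x) (at x)" "\<forall>v. (\<lambda>x. Df x v) \<in> Creal U"
    and g: "\<forall>x\<in>U. (g has_derivative Dg x) (at x)" "\<forall>v. (\<lambda>x. Dg x v) \<in> Creal U" by blast
  show ?case
  proof (rule exI[of _ "\<lambda>x v. f x * Dg x v + Df x v * g x"], intro conjI ballI allI)
    fix x assume x: "x \<in> U"
    show "((\<lambda>x. f x * g x) has_derivative (\<lambda>v. f x * Dg x v + Df x v * g x)) (at x)"
      by (rule has_derivative_mult[OF f(1)[rule_format, OF x] g(1)[rule_format, OF x]])
  next
    fix v show "(\<lambda>x. f x * Dg x v + Df x v * g x) \<in> Creal U"
      by (rule Creal.add[OF Creal.mult[OF mult.hyps(1) g(2)[rule_format]] Creal.mult[OF f(2)[rule_format] mult.hyps(2)]])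
  qed
next
  case (pow f r)
  then obtain Df where f: "\<forall>x\<in>U. (f has_derivative Df x) (at x)" "\<forall>v. (\<lambda>x. Df x v) \<in> Creal U" by blast
  have d1: "((\<lambda>x. f x powr r) has_derivative (\<lambda>v. r * f x powr (r - 1) * Df x v)) (at x)" if "x \<in> U" for x
  proof -
    have fx: "f x > 0" using pow.hyps that by blast
    have "((\<lambda>x. f x powr (\<lambda>_. r) x) has_derivative (\<lambda>h. (f x powr r) * (0 * ln (f x) + Df x h * r / f x))) (at x within UNIV)"
      by (rule has_derivative_powr[OF f(1)[rule_format, OF that] has_derivative_const fx UNIV_I])
    moreover have "(\<lambda>h. (f x powr r) * (0 * ln (f x) + Df x h * r / f x)) = (\<lambda>v. r * f x powr (r - 1) * Df x v)"
    proof
      fix h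
      have e: "f x powr (r - 1) = f x powr r / f x" using fx by (simp add: powr_diff)
      show "(f x powr r) * (0 * ln (f x) + Df x h * r / f x) = r * f x powr (r - 1) * Df x h"
        unfolding e by simp
    qed
    ultimately show ?thesis by simp
  qed
  have d2: "(\<lambda>x. r * f x powr (r - 1) * Df x v) \<in> Creal U" for v
    by (rule Creal.mult[OF Creal.mult[OF Creal.const Creal.pow[OF pow.hyps(1) pow.hyps(2)]] f(2)[rule_format]])
  show ?case
  proof (rule exI[of _ "\<lambda>x v. r * f x powr (r - 1) * Df x v"], intro conjI ballI allI)
    fix x assume "x \<in> U" then show "((\<lambda>x. f x powr r) has_derivative (\<lambda>v. r * f x powr (r - 1) * Df x v)) (at x)" by (rule d1)
  next
    fix v show "(\<lambda>x. r * f x powr (r - 1) * Df x v) \<in> Creal U" by (rule d2)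
  qed
qed

definition Cvec :: "'a::euclidean_space set \<Rightarrow> ('a \<Rightarrow> 'b::euclidean_space) set" where
  "Cvec U = {F. \<forall>b\<in>Basis. (\<lambda>x. F x \<bullet> b) \<in> Creal U}"

lemma Cvec_step:
  assumes U: "open U" and F: "F \<in> Cvec U"
  shows "F differentiable_on U \<and> (\<forall>v. \<exists>h\<in>Cvec U. \<forall>x\<in>U. frechet_derivative F (at x) v = h x)"
proof -
  have "\<forall>b\<in>(Basis::'b set). \<exists>D. (\<forall>x\<in>U. ((\<lambda>x. F x \<bullet> b) has_derivative D x) (at x)) \<and> (\<forall>v. (\<lambda>x. D x v) \<in> Creal U)"
    using F Creal_deriv unfolding Cvec_def by blast
  from bchoice[OF this] obtain DD where DD0: "\<forall>b\<in>(Basis::'b set). (\<forall>x\<in>U. ((\<lambda>x. F x \<bullet> b) has_derivative DD b x) (at x)) \<and> (\<forall>v. (\<lambda>x. DD b x v) \<in> Creal U)"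
    by blast
  have DD: "\<And>b x. b \<in> (Basis::'b set) \<Longrightarrow> x \<in> U \<Longrightarrow> ((\<lambda>x. F x \<bullet> b) has_derivative DD b x) (at x)"
     "\<And>b v. b \<in> (Basis::'b set) \<Longrightarrow> (\<lambda>x. DD b x v) \<in> Creal U"
    using DD0 by auto
  have der: "(F has_derivative (\<lambda>v. \<Sum>b\<in>Basis. DD b x v *\<^sub>R b)) (at x)" if "x \<in> U" for x
  proof -
    have "((\<lambda>x. \<Sum>b\<in>Basis. (F x \<bullet> b) *\<^sub>R b) has_derivative (\<lambda>v. \<Sum>b\<in>Basis. DD b x v *\<^sub>R b)) (at x)"
      by (intro has_derivative_sum has_derivative_scaleR_left DD that)
    then show ?thesis by (simp add: euclidean_representation)
  qed
  have "F differentiable_on U"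
    unfolding differentiable_on_def
  proof
    fix x assume "x \<in> U"
    then have "F differentiable at x" using der differentiableI by blast
    then show "F differentiable at x within U" by (rule differentiable_at_withinI)
  qed
  moreover have "\<exists>h\<in>Cvec U. \<forall>x\<in>U. frechet_derivative F (at x) v = h x" for v
  proof (rule bexI[of _ "\<lambda>x. \<Sum>b\<in>Basis. DD b x v *\<^sub>R b"])
    show "\<forall>x\<in>U. frechet_derivative F (at x) v = (\<Sum>b\<in>Basis. DD b x v *\<^sub>R b)"
    proof
      fix x assume "x \<in> U"
      from frechet_derivative_at[OF der[OF this], symmetric] show "frechet_derivative F (at x) v = (\<Sum>b\<in>Basis. DD b x v *\<^sub>R b)"
        by simp
    qed
    show "(\<lambda>x. \<Sum>b\<in>Basis. DD b x v *\<^sub>R b) \<in> Cvec U"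
      unfolding Cvec_def using DD(2) by (simp add: inner_sum_left_Basis)
  qed
  ultimately show ?thesis by blast
qed

lemma smooth_on_Cvec:
  assumes "open U" "F \<in> Cvec U" shows "smooth_on U F"
  unfolding smooth_on_def
proof (intro conjI allI)
  show "open U" by (fact assms(1))
  fix k show "Ck_on k U F" by (rule Ck_coind[OF assms(1) assms(2) Cvec_step[OF assms(1)]])
qed

lemma Cvec_diff:
  assumes "open U" "F \<in> Cvec U" "x \<in> U" shows "F differentiable at x"
proof -
  have "F differentiable_on U" using Cvec_step[OF assms(1,2)] by blast
  then have "F differentiable at x within U" using assms(3) by (simp add: differentiable_on_def)
  then show ?thesis using at_within_open[OF assms(3,1)] by simp
qed

lemma Creal_sum:
  assumes "finite I" "\<And>i. i \<in> I \<Longrightarrow> f i \<in> Creal U"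
  shows "(\<lambda>x. \<Sum>i\<in>I. f i x) \<in> Creal U"
  using assms
proof (induction I rule: finite_induct)
  case empty
  show ?case by (simp add: Creal.const)
next
  case (insert i I)
  have "(\<lambda>x. f i x + (\<Sum>i\<in>I. f i x)) \<in> Creal U"
    by (rule Creal.add) (use insert in auto)
  then show ?case using insert by simp
qed

lemma Creal_lin_comp: "bounded_linear L \<Longrightarrow> (\<lambda>x. L x) \<in> Creal U"
  by (drule Creal.lin) simp

lemma Creal_Re: "(\<lambda>z::complex^'n. Re (z $ k)) \<in> Creal U"
  by (rule Creal_lin_comp, rule bounded_linear_compose[OF bounded_linear_Re bounded_linear_vec_nth])

lemma Creal_Im: "(\<lambda>z::complex^'n. Im (z $ k)) \<in> Creal U"
  by (rule Creal_lin_comp, rule bounded_linear_compose[OF bounded_linear_Im bounded_linear_vec_nth])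

lemma Creal_inner: "(\<lambda>z::complex^'n. z $ k \<bullet> e) \<in> Creal U"
  by (rule Creal_lin_comp, rule bounded_linear_compose[OF bounded_linear_inner_left bounded_linear_vec_nth])

lemma Creal_wsq: "(\<lambda>z::complex^'n. \<Sum>k\<in>UNIV. (cmod (z $ k))\<^sup>2 * c k) \<in> Creal U"
proof -
  have "(\<lambda>z::complex^'n. \<Sum>k\<in>UNIV. (Re (z $ k) * Re (z $ k) + Im (z $ k) * Im (z $ k)) * c k) \<in> Creal U"
    by (rule Creal_sum) (simp, intro Creal.mult Creal.add Creal_Re Creal_Im Creal.const)
  moreover have "(\<lambda>z::complex^'n. \<Sum>k\<in>UNIV. (cmod (z $ k))\<^sup>2 * c k) = (\<lambda>z. \<Sum>k\<in>UNIV. (Re (z $ k) * Re (z $ k) + Im (z $ k) * Im (z $ k)) * c k)"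
    by (rule ext, rule sum.cong[OF refl], subst cmod_power2, simp add: power2_eq_square)
  ultimately show ?thesis by simp
qed

lemma wsq_pos:
  fixes z :: "complex^'n"
  assumes "z \<noteq> 0" "\<And>k. c k > 0"
  shows "(\<Sum>k\<in>UNIV. (cmod (z $ k))\<^sup>2 * c k) > 0"
proof -
  obtain k where k: "z $ k \<noteq> 0" using assms(1) by (auto simp: vec_eq_iff)
  show ?thesis
  proof (rule sum_pos2[of UNIV k])
    show "0 < (cmod (z $ k))\<^sup>2 * c k" using k assms(2)[of k] by simp
  next
    fix i show "0 \<le> (cmod (z $ i))\<^sup>2 * c i" by (rule mult_nonneg_nonneg[OF zero_le_power2 less_imp_le[OF assms(2)]])
  qed auto
qed

lemma Cvec_scal:
  assumes "\<And>j. \<phi> j \<in> Creal U"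
  shows "(\<lambda>z::complex^'n. \<chi> j. complex_of_real (\<phi> j z) * z $ j) \<in> Cvec U"
  unfolding Cvec_def
proof (intro CollectI ballI)
  fix b :: "complex^'n" assume "b \<in> Basis"
  then obtain j e where b: "b = axis j e" "e \<in> (Basis :: complex set)" unfolding Basis_vec_def by blast
  have "(\<lambda>z::complex^'n. \<phi> j z * (z $ j \<bullet> e)) \<in> Creal U"
    by (rule Creal.mult[OF assms Creal_inner])
  moreover have "(\<lambda>z::complex^'n. (\<chi> j. complex_of_real (\<phi> j z) * z $ j) \<bullet> b) = (\<lambda>z. \<phi> j z * (z $ j \<bullet> e))"
    by (simp add: b inner_axis scaleR_conv_of_real[symmetric])
  ultimately show "(\<lambda>z::complex^'n. (\<chi> j. complex_of_real (\<phi> j z) * z $ j) \<bullet> b) \<in> Creal U" by simp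
qed

definition SS :: "real^'n \<Rightarrow> complex^'n \<Rightarrow> real" where
  "SS a z = (\<Sum>k\<in>UNIV. (cmod (z $ k))\<^sup>2 * (1 / (a $ k)\<^sup>2))"

definition nsq :: "complex^'n \<Rightarrow> real" where
  "nsq z = (\<Sum>k\<in>UNIV. (cmod (z $ k))\<^sup>2 * 1)"

definition Gm :: "real^'n \<Rightarrow> complex^'n \<Rightarrow> complex^'n" where
  "Gm a z = (\<chi> j. complex_of_real ((pi * a $ j * SS a z) powr (-1/2)) * z $ j)"

definition Hm :: "real^'n \<Rightarrow> complex^'n \<Rightarrow> complex^'n" where
  "Hm a u = (\<chi> j. complex_of_real ((pi / a $ j * nsq u) powr (-1/2)) * u $ j)"

lemma SS_pos:
  assumes "\<forall>j. a $ j > 0" "z \<noteq> 0" shows "SS a z > 0"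
proof -
  have "1 / (a $ k)\<^sup>2 > 0" for k
  proof -
    have "a $ k > 0" using assms(1) by blast
    then show ?thesis by simp
  qed
  then show ?thesis unfolding SS_def by (intro wsq_pos assms(2))
qed

lemma nsq_pos: "z \<noteq> 0 \<Longrightarrow> nsq z > 0"
  unfolding nsq_def by (rule wsq_pos) auto

lemma Gm_Cvec:
  fixes a :: "real^'n"
  assumes "\<forall>j. a $ j > 0"
  shows "Gm a \<in> Cvec (- {0})"
  unfolding Gm_def
proof (rule Cvec_scal)
  fix j
  have "(\<lambda>z::complex^'n. (pi * a $ j) * SS a z) \<in> Creal (- {0})"
    by (rule Creal.mult[OF Creal.const]) (unfold SS_def, rule Creal_wsq)
  moreover have "\<forall>z\<in>- {0}. (pi * a $ j) * SS a z > 0"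
  proof
    fix z :: "complex^'n" assume "z \<in> - {0}"
    then have "z \<noteq> 0" by simp
    from SS_pos[OF assms this] have p: "SS a z > 0" .
    have aj: "a $ j > 0" using assms by blast
    show "(pi * a $ j) * SS a z > 0" by (intro mult_pos_pos divide_pos_pos pi_gt_zero p aj)
  qed
  ultimately show "(\<lambda>z::complex^'n. (pi * a $ j * SS a z) powr (-1/2)) \<in> Creal (- {0})"
    by (rule Creal.pow)
qed

lemma Hm_Cvec:
  fixes a :: "real^'n"
  assumes "\<forall>j. a $ j > 0"
  shows "Hm a \<in> Cvec (- {0})"
  unfolding Hm_def
proof (rule Cvec_scal)
  fix j
  have "(\<lambda>z::complex^'n. (pi / a $ j) * nsq z) \<in> Creal (- {0})"
    by (rule Creal.mult[OF Creal.const]) (unfold nsq_def, rule Creal_wsq)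
  moreover have "\<forall>z\<in>(- {0}::(complex^'n) set). (pi / a $ j) * nsq z > 0"
  proof
    fix z :: "complex^'n" assume "z \<in> - {0}"
    then have "z \<noteq> 0" by simp
    from nsq_pos[OF this] have p: "nsq z > 0" .
    have aj: "a $ j > 0" using assms by blast
    show "(pi / a $ j) * nsq z > 0" by (intro mult_pos_pos divide_pos_pos pi_gt_zero p aj)
  qed
  ultimately show "(\<lambda>z::complex^'n. (pi / a $ j * nsq z) powr (-1/2)) \<in> Creal (- {0})"
    by (rule Creal.pow)
qed

lemma powe: "(x::real) > 0 \<Longrightarrow> x powr (-1/2) = inverse (sqrt x)"
  by (metis minus_divide_left powr_half_sqrt powr_minus less_imp_le)
lemma pw1: assumes "(x::real) > 0" shows "(x powr (-1/2))\<^sup>2 = 1 / x"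
  unfolding powe[OF assms] using assms by (simp add: power_inverse divide_inverse)
lemma pw2: assumes "(x::real) > 0" shows "(1 / x) powr (-1/2) * x powr (-1/2) = 1"
proof -
  have "1 / x > 0" using assms by simp
  show ?thesis unfolding powe[OF assms] powe[OF \<open>1/x>0\<close>] using assms by (simp add: real_sqrt_divide)
qed

lemma cm: "(cmod (complex_of_real c * w))\<^sup>2 = c\<^sup>2 * (cmod w)\<^sup>2"
  by (simp add: norm_mult power_mult_distrib)

lemma zero_notin: "(0::complex^'n) \<notin> ellipsoid_boundary a"
  by (simp add: ellipsoid_boundary_def)

lemma ES_eq: "z \<in> ellipsoid_boundary a \<longleftrightarrow> (\<Sum>j\<in>UNIV. (cmod (z $ j))\<^sup>2 / a $ j) = 1 / pi"
  unfolding ellipsoid_boundary_def by (auto simp: field_simps)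

lemma Gm_comp: "(cmod (Gm a z $ j))\<^sup>2 = (cmod (z $ j))\<^sup>2 / (pi * a $ j * SS a z)"
  if "a $ j > 0" "SS a z > 0"
proof -
  have X: "pi * a $ j * SS a z > 0" using that by simp
  show ?thesis by (simp only: Gm_def vec_lambda_beta cm pw1[OF X]) simp
qed

lemma Hm_comp: "(cmod (Hm a u $ j))\<^sup>2 = (cmod (u $ j))\<^sup>2 * a $ j / (pi * nsq u)"
  if "a $ j > 0" "nsq u > 0"
proof -
  have X: "pi / a $ j * nsq u > 0" using that by simp
  show ?thesis using that by (simp only: Hm_def vec_lambda_beta cm pw1[OF X]) (simp add: field_simps)
qed

lemma Gm_in:
  fixes a :: "real^'n"
  assumes a: "\<forall>j. a $ j > 0" and z: "z \<noteq> 0"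
  shows "Gm a z \<in> ellipsoid_boundary a"
proof -
  have s: "SS a z > 0" by (rule SS_pos[OF a z])
  have "(\<Sum>j\<in>UNIV. (cmod (Gm a z $ j))\<^sup>2 / a $ j) = (\<Sum>j\<in>UNIV. ((cmod (z $ j))\<^sup>2 * (1 / (a $ j)\<^sup>2)) / (pi * SS a z))"
  proof (rule sum.cong[OF refl])
    fix j have aj: "a $ j > 0" using a by blast
    show "(cmod (Gm a z $ j))\<^sup>2 / a $ j = ((cmod (z $ j))\<^sup>2 * (1 / (a $ j)\<^sup>2)) / (pi * SS a z)"
      unfolding Gm_comp[OF aj s] using aj s by (simp add: power2_eq_square field_simps)
  qed
  also have "\<dots> = SS a z / (pi * SS a z)" unfolding SS_def by (simp add: sum_divide_distrib)
  also have "\<dots> = 1 / pi" using s by simp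
  finally show ?thesis unfolding ES_eq .
qed

lemma Hm_in:
  fixes a :: "real^'n"
  assumes a: "\<forall>j. a $ j > 0" and u: "u \<noteq> 0"
  shows "Hm a u \<in> ellipsoid_boundary a"
proof -
  have s: "nsq u > 0" by (rule nsq_pos[OF u])
  have "(\<Sum>j\<in>UNIV. (cmod (Hm a u $ j))\<^sup>2 / a $ j) = (\<Sum>j\<in>UNIV. ((cmod (u $ j))\<^sup>2 * 1) / (pi * nsq u))"
  proof (rule sum.cong[OF refl])
    fix j have aj: "a $ j > 0" using a by blast
    show "(cmod (Hm a u $ j))\<^sup>2 / a $ j = ((cmod (u $ j))\<^sup>2 * 1) / (pi * nsq u)"
      unfolding Hm_comp[OF aj s] using aj s by (simp add: field_simps)
  qed
  also have "\<dots> = nsq u / (pi * nsq u)" unfolding nsq_def by (simp add: sum_divide_distrib)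
  also have "\<dots> = 1 / pi" using s by simp
  finally show ?thesis unfolding ES_eq .
qed

lemma nsq_Gm:
  fixes a :: "real^'n"
  assumes a: "\<forall>j. a $ j > 0" and z: "z \<in> ellipsoid_boundary a"
  shows "nsq (Gm a z) = 1 / (pi * pi * SS a z)"
proof -
  have z0: "z \<noteq> 0" using z zero_notin by blast
  have s: "SS a z > 0" by (rule SS_pos[OF a z0])
  have "nsq (Gm a z) = (\<Sum>j\<in>UNIV. (cmod (z $ j))\<^sup>2 / a $ j / (pi * SS a z))"
    unfolding nsq_def
  proof (rule sum.cong[OF refl])
    fix j have aj: "a $ j > 0" using a by blast
    show "(cmod (Gm a z $ j))\<^sup>2 * 1 = (cmod (z $ j))\<^sup>2 / a $ j / (pi * SS a z)"
      unfolding Gm_comp[OF aj s] using aj s by (simp add: field_simps)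
  qed
  also have "\<dots> = (\<Sum>j\<in>UNIV. (cmod (z $ j))\<^sup>2 / a $ j) / (pi * SS a z)" by (rule sum_divide_distrib[symmetric])
  also have "\<dots> = (1 / pi) / (pi * SS a z)" using z unfolding ES_eq by simp
  finally show ?thesis by simp
qed

lemma SS_Hm:
  fixes a :: "real^'n"
  assumes a: "\<forall>j. a $ j > 0" and u: "u \<in> ellipsoid_boundary a"
  shows "SS a (Hm a u) = 1 / (pi * pi * nsq u)"
proof -
  have u0: "u \<noteq> 0" using u zero_notin by blast
  have s: "nsq u > 0" by (rule nsq_pos[OF u0])
  have "SS a (Hm a u) = (\<Sum>j\<in>UNIV. (cmod (u $ j))\<^sup>2 / a $ j / (pi * nsq u))"
    unfolding SS_def
  proof (rule sum.cong[OF refl])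
    fix j have aj: "a $ j > 0" using a by blast
    show "(cmod (Hm a u $ j))\<^sup>2 * (1 / (a $ j)\<^sup>2) = (cmod (u $ j))\<^sup>2 / a $ j / (pi * nsq u)"
      unfolding Hm_comp[OF aj s] using aj s by (simp add: power2_eq_square field_simps)
  qed
  also have "\<dots> = (\<Sum>j\<in>UNIV. (cmod (u $ j))\<^sup>2 / a $ j) / (pi * nsq u)" by (rule sum_divide_distrib[symmetric])
  also have "\<dots> = (1 / pi) / (pi * nsq u)" using u unfolding ES_eq by simp
  finally show ?thesis by simp
qed

lemma HG:
  fixes a :: "real^'n"
  assumes a: "\<forall>j. a $ j > 0" and z: "z \<in> ellipsoid_boundary a"
  shows "Hm a (Gm a z) = z"
proof -
  have z0: "z \<noteq> 0" using z zero_notin by blast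
  have s: "SS a z > 0" by (rule SS_pos[OF a z0])
  have "Hm a (Gm a z) $ j = z $ j" for j
  proof -
    have aj: "a $ j > 0" using a by blast
    have X: "pi * a $ j * SS a z > 0" using aj s by simp
    have e: "pi / a $ j * nsq (Gm a z) = 1 / (pi * a $ j * SS a z)"
      unfolding nsq_Gm[OF a z] using aj s by (simp add: field_simps)
    have "Hm a (Gm a z) $ j = complex_of_real ((1 / (pi * a $ j * SS a z)) powr (-1/2)) * (complex_of_real ((pi * a $ j * SS a z) powr (-1/2)) * z $ j)"
      apply (unfold Hm_def vec_lambda_beta e)
      apply (unfold Gm_def vec_lambda_beta)
      by (rule refl)
    then show ?thesis by (simp only: mult.assoc[symmetric] of_real_mult[symmetric] pw2[OF X]) simp
  qed
  then show ?thesis by (simp add: vec_eq_iff)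
qed

lemma GH:
  fixes a :: "real^'n"
  assumes a: "\<forall>j. a $ j > 0" and u: "u \<in> ellipsoid_boundary a"
  shows "Gm a (Hm a u) = u"
proof -
  have u0: "u \<noteq> 0" using u zero_notin by blast
  have s: "nsq u > 0" by (rule nsq_pos[OF u0])
  have "Gm a (Hm a u) $ j = u $ j" for j
  proof -
    have aj: "a $ j > 0" using a by blast
    have X: "pi / a $ j * nsq u > 0" using aj s by simp
    have e: "pi * a $ j * SS a (Hm a u) = 1 / (pi / a $ j * nsq u)"
      unfolding SS_Hm[OF a u] using aj s by (simp add: field_simps)
    have "Gm a (Hm a u) $ j = complex_of_real ((1 / (pi / a $ j * nsq u)) powr (-1/2)) * (complex_of_real ((pi / a $ j * nsq u) powr (-1/2)) * u $ j)"
      apply (unfold Gm_def vec_lambda_beta e)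
      apply (unfold Hm_def vec_lambda_beta)
      by (rule refl)
    then show ?thesis by (simp only: mult.assoc[symmetric] of_real_mult[symmetric] pw2[OF X]) simp
  qed
  then show ?thesis by (simp add: vec_eq_iff)
qed

lemma G_bij:
  fixes a :: "real^'n"
  assumes a: "\<forall>j. a $ j > 0"
  shows "bij_betw (Gm a) (ellipsoid_boundary a) (ellipsoid_boundary a)"
proof (rule bij_betw_byWitness[where f'="Hm a"])
  show "\<forall>z\<in>ellipsoid_boundary a. Hm a (Gm a z) = z" using HG[OF a] by blast
  show "\<forall>u\<in>ellipsoid_boundary a. Gm a (Hm a u) = u" using GH[OF a] by blast
  show "Gm a ` ellipsoid_boundary a \<subseteq> ellipsoid_boundary a"
  proof (rule image_subsetI)
    fix z assume "z \<in> ellipsoid_boundary a"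
    then have "z \<noteq> 0" using zero_notin by metis
    then show "Gm a z \<in> ellipsoid_boundary a" by (rule Gm_in[OF a])
  qed
  show "Hm a ` ellipsoid_boundary a \<subseteq> ellipsoid_boundary a"
  proof (rule image_subsetI)
    fix z assume "z \<in> ellipsoid_boundary a"
    then have "z \<noteq> 0" using zero_notin by metis
    then show "Hm a z \<in> ellipsoid_boundary a" by (rule Hm_in[OF a])
  qed
qed

lemma G_inv:
  fixes a :: "real^'n"
  assumes a: "\<forall>j. a $ j > 0" and u: "u \<in> ellipsoid_boundary a"
  shows "inv_into (ellipsoid_boundary a) (Gm a) u = Hm a u"
proof (rule inv_into_f_eq)
  show "inj_on (Gm a) (ellipsoid_boundary a)" using G_bij[OF a] unfolding bij_betw_def by (rule conjunct1)
  have "u \<noteq> 0" using zero_notin u by metis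
  then show "Hm a u \<in> ellipsoid_boundary a" by (rule Hm_in[OF a])
  show "Gm a (Hm a u) = u" by (rule GH[OF a u])
qed

lemma G_diffeo:
  fixes a :: "real^'n"
  assumes a: "\<forall>j. a $ j > 0"
  shows "diffeo_on (ellipsoid_boundary a) (Gm a)"
  unfolding diffeo_on_def
proof (intro conjI)
  show "bij_betw (Gm a) (ellipsoid_boundary a) (ellipsoid_boundary a)" by (rule G_bij[OF a])
  have sub: "ellipsoid_boundary a \<subseteq> - {0}" using zero_notin by (metis ComplI singletonD subsetI)
  have o: "open (- {0::complex^'n})" by (simp add: open_Compl)
  show "smooth_map_on (ellipsoid_boundary a) (Gm a)"
    unfolding smooth_map_on_def
    by (rule exI[of _ "- {0}"], rule exI[of _ "Gm a"], intro conjI ballI refl sub smooth_on_Cvec[OF o Gm_Cvec[OF a]])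
  show "smooth_map_on (ellipsoid_boundary a) (inv_into (ellipsoid_boundary a) (Gm a))"
    unfolding smooth_map_on_def
    by (rule exI[of _ "- {0}"], rule exI[of _ "Hm a"], intro conjI ballI sub smooth_on_Cvec[OF o Hm_Cvec[OF a]], rule G_inv[OF a, symmetric])
qed

definition Np :: "real^'n \<Rightarrow> complex^'n \<Rightarrow> complex^'n \<Rightarrow> real" where
  "Np a p w = (\<Sum>j\<in>UNIV. (Re (p $ j) * Re (w $ j) + Im (p $ j) * Im (w $ j)) / a $ j)"

definition Mp :: "real^'n \<Rightarrow> complex^'n \<Rightarrow> complex^'n \<Rightarrow> real" where
  "Mp a p w = (\<Sum>j\<in>UNIV. (Re (p $ j) * Im (w $ j) - Im (p $ j) * Re (w $ j)) / a $ j)"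

definition Phi :: "real^'n \<Rightarrow> complex^'n \<Rightarrow> real" where
  "Phi a z = pi * (\<Sum>j\<in>UNIV. (Re (z $ j) * Re (z $ j) + Im (z $ j) * Im (z $ j)) / a $ j)"

lemma ES_Phi: "z \<in> ellipsoid_boundary a \<longleftrightarrow> Phi a z = 1"
  unfolding ellipsoid_boundary_def Phi_def by (simp only: cmod_power2 mem_Collect_eq) (simp only: power2_eq_square)

lemma Np_lin: "Np a p (x + c *\<^sub>R y) = Np a p x + c * Np a p y"
  unfolding Np_def sum_distrib_left sum.distrib[symmetric]
  by (rule sum.cong[OF refl]) (simp add: algebra_simps add_divide_distrib)

lemma Np_self: "Np a p p = Phi a p / pi"
  unfolding Np_def Phi_def by simp

lemma comp_deriv:
  assumes "(\<gamma> has_vector_derivative v) (at t0)"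
  shows "((\<lambda>t. Re (\<gamma> t $ j)) has_real_derivative Re (v $ j)) (at t0)"
    and "((\<lambda>t. Im (\<gamma> t $ j)) has_real_derivative Im (v $ j)) (at t0)"
proof -
  show "((\<lambda>t. Re (\<gamma> t $ j)) has_real_derivative Re (v $ j)) (at t0)"
    unfolding has_real_derivative_iff_has_vector_derivative
    using bounded_linear.has_vector_derivative[OF bounded_linear_compose[OF bounded_linear_Re bounded_linear_vec_nth] assms]
    by simp
  show "((\<lambda>t. Im (\<gamma> t $ j)) has_real_derivative Im (v $ j)) (at t0)"
    unfolding has_real_derivative_iff_has_vector_derivative
    using bounded_linear.has_vector_derivative[OF bounded_linear_compose[OF bounded_linear_Im bounded_linear_vec_nth] assms]
    by simp
qed

lemma Phi_deriv:
  assumes g: "(\<gamma> has_vector_derivative v) (at t0)"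
  shows "((\<lambda>t. Phi a (\<gamma> t)) has_real_derivative 2 * pi * Np a (\<gamma> t0) v) (at t0)"
proof -
  note re = comp_deriv(1)[OF g] and im = comp_deriv(2)[OF g]
  have "((\<lambda>t. Phi a (\<gamma> t)) has_real_derivative pi * (\<Sum>j\<in>UNIV. (Re (v $ j) * Re (\<gamma> t0 $ j) + Re (v $ j) * Re (\<gamma> t0 $ j) + (Im (v $ j) * Im (\<gamma> t0 $ j) + Im (v $ j) * Im (\<gamma> t0 $ j))) / a $ j)) (at t0)"
    unfolding Phi_def by (intro DERIV_cmult DERIV_sum DERIV_cdivide DERIV_add DERIV_mult re im)
  moreover have "pi * (\<Sum>j\<in>UNIV. (Re (v $ j) * Re (\<gamma> t0 $ j) + Re (v $ j) * Re (\<gamma> t0 $ j) + (Im (v $ j) * Im (\<gamma> t0 $ j) + Im (v $ j) * Im (\<gamma> t0 $ j))) / a $ j)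
     = 2 * pi * Np a (\<gamma> t0) v"
    unfolding Np_def sum_distrib_left
    by (rule sum.cong[OF refl]) (simp add: algebra_simps add_divide_distrib)
  ultimately show ?thesis by (simp add: mult_ac)
qed

lemma T1:
  assumes "\<forall>t. \<gamma> t \<in> ellipsoid_boundary a" "\<gamma> 0 = p" "(\<gamma> has_vector_derivative v) (at 0)"
  shows "Np a p v = 0"
proof -
  have d: "((\<lambda>t. Phi a (\<gamma> t)) has_real_derivative 2 * pi * Np a p v) (at 0)"
    using Phi_deriv[OF assms(3)] assms(2) by simp
  have c: "(\<lambda>t. Phi a (\<gamma> t)) = (\<lambda>t. 1)" using assms(1) ES_Phi by blast
  have "((\<lambda>t. Phi a (\<gamma> t)) has_real_derivative 0) (at 0)" unfolding c by (rule DERIV_const)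
  from DERIV_unique[OF d this] show ?thesis by simp
qed

lemma Phi_scale: "Phi a (c *\<^sub>R z) = c\<^sup>2 * Phi a z"
  unfolding Phi_def sum_distrib_left
  by (simp add: sum_distrib_left power2_eq_square algebra_simps)

lemma Phi_alt: "Phi a z = pi * (\<Sum>j\<in>UNIV. (cmod (z $ j))\<^sup>2 * (1 / a $ j))"
  unfolding Phi_def by (simp only: cmod_power2) (simp add: power2_eq_square)

lemma Phi_pos:
  fixes a :: "real^'n"
  assumes a: "\<forall>j. a $ j > 0" and z: "z \<noteq> 0"
  shows "Phi a z > 0"
proof -
  have "1 / a $ k > 0" for k using a by simp
  then have "(\<Sum>j\<in>UNIV. (cmod (z $ j))\<^sup>2 * (1 / a $ j)) > 0" by (intro wsq_pos z)
  then show ?thesis unfolding Phi_alt by simp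
qed

lemma Np_zero: "Np a p 0 = 0"
  unfolding Np_def by simp

lemma T2:
  fixes a :: "real^'n"
  assumes a: "\<forall>j. a $ j > 0" and p: "p \<in> ellipsoid_boundary a" and N: "Np a p w = 0"
  shows "w \<in> tangent_space (ellipsoid_boundary a) p"
proof -
  define q where "q t = p + t *\<^sub>R w" for t :: real
  have P1: "Phi a p = 1" using p ES_Phi by blast
  have qne: "q t \<noteq> 0" for t
  proof
    assume "q t = 0"
    then have "Np a p (q t) = 0" by (simp add: Np_zero)
    moreover have "Np a p (q t) = 1 / pi" unfolding q_def Np_lin N Np_self P1 by simp
    ultimately show False by simp
  qed
  have qpos: "Phi a (q t) > 0" for t by (rule Phi_pos[OF a qne])
  define f where "f t = Phi a (q t) powr (-1/2)" for t
  define \<gamma> where "\<gamma> t = f t *\<^sub>R q t" for t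
  have inS: "\<gamma> t \<in> ellipsoid_boundary a" for t
    unfolding ES_Phi \<gamma>_def Phi_scale f_def pw1[OF qpos] using qpos[of t] by simp
  have q0: "q 0 = p" unfolding q_def by simp
  have f0: "f 0 = 1" unfolding f_def q0 P1 by simp
  have g0: "\<gamma> 0 = p" unfolding \<gamma>_def f0 q0 by simp
  have dl: "((\<lambda>t. t *\<^sub>R w) has_vector_derivative w) (at 0)"
    unfolding has_vector_derivative_def by (rule bounded_linear_imp_has_derivative) (rule bounded_linear_scaleR_left)
  have dq: "(q has_vector_derivative w) (at 0)"
    using has_vector_derivative_add[OF has_vector_derivative_const dl, of p] unfolding q_def[abs_def] by simp
  have dPhi: "((\<lambda>t. Phi a (q t)) has_real_derivative 0) (at 0)"
    using Phi_deriv[OF dq, of a] unfolding q0 N by simp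
  have df: "(f has_real_derivative 0) (at 0)"
  proof -
    have "((\<lambda>t. Phi a (q t) powr (\<lambda>_. -1/2) t) has_real_derivative
        Phi a (q 0) powr (-1/2) * (0 * ln (Phi a (q 0)) + 0 * (-1/2) / Phi a (q 0))) (at 0)"
      by (rule DERIV_powr[OF dPhi qpos DERIV_const])
    then show ?thesis unfolding f_def[abs_def] by simp
  qed
  have "(\<gamma> has_vector_derivative (f 0 *\<^sub>R w + 0 *\<^sub>R q 0)) (at 0)"
    unfolding \<gamma>_def[abs_def] by (rule has_vector_derivative_scaleR[OF df dq])
  then have "(\<gamma> has_vector_derivative w) (at 0)" unfolding f0 by simp
  then show ?thesis unfolding tangent_space_def using inS g0 by blast
qed

lemma phiG_Creal:
  fixes a :: "real^'n"
  assumes "\<forall>j. a $ j > 0"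
  shows "(\<lambda>z::complex^'n. (pi * a $ j * SS a z) powr (-1/2)) \<in> Creal (- {0})"
proof -
  have "(\<lambda>z::complex^'n. (pi * a $ j) * SS a z) \<in> Creal (- {0})"
    by (rule Creal.mult[OF Creal.const]) (unfold SS_def, rule Creal_wsq)
  moreover have "\<forall>z\<in>(- {0}::(complex^'n) set). (pi * a $ j) * SS a z > 0"
  proof
    fix z :: "complex^'n" assume "z \<in> - {0}"
    then have "z \<noteq> 0" by simp
    from SS_pos[OF assms this] have p: "SS a z > 0" .
    have aj: "a $ j > 0" using assms by blast
    show "(pi * a $ j) * SS a z > 0" by (intro mult_pos_pos divide_pos_pos pi_gt_zero p aj)
  qed
  ultimately show ?thesis by (rule Creal.pow)
qed

lemma w_comp:
  fixes a :: "real^'n"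
  assumes a: "\<forall>j. a $ j > 0" and p: "p \<in> ellipsoid_boundary a"
    and g0: "\<gamma> 0 = p" and gv: "(\<gamma> has_vector_derivative v) (at 0)"
    and gw: "((Gm a \<circ> \<gamma>) has_vector_derivative w) (at 0)"
  shows "\<exists>d. w $ j = complex_of_real ((pi * a $ j * SS a p) powr (-1/2)) * v $ j + complex_of_real d * p $ j"
proof -
  define \<phi> where "\<phi> = (\<lambda>z::complex^'n. (pi * a $ j * SS a z) powr (-1/2))"
  have pU: "p \<in> - {0}" using p zero_notin by (metis ComplI singletonD)
  obtain D where D: "\<forall>x\<in>- {0}. (\<phi> has_derivative D x) (at x)"
    using Creal_deriv[OF phiG_Creal[OF a, of j]] unfolding \<phi>_def by blast
  have Dp: "(\<phi> has_derivative D p) (at (\<gamma> 0))" using D pU g0 by simp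
  have gd: "(\<gamma> has_derivative (\<lambda>h. h *\<^sub>R v)) (at 0)" using gv unfolding has_vector_derivative_def .
  have c1: "((\<lambda>t. \<phi> (\<gamma> t)) has_derivative (\<lambda>h. D p (h *\<^sub>R v))) (at 0)"
    by (rule has_derivative_compose[OF gd Dp])
  have lin: "linear (D p)" using Dp has_derivative_linear by blast
  have "(\<lambda>h. D p (h *\<^sub>R v)) = (\<lambda>h. D p v * h)"
    using linear_scale[OF lin] by (simp add: mult.commute)
  then have c2: "((\<lambda>t. \<phi> (\<gamma> t)) has_real_derivative D p v) (at 0)"
    using c1 unfolding has_field_derivative_def by simp
  have c3: "((\<lambda>t. complex_of_real (\<phi> (\<gamma> t))) has_vector_derivative complex_of_real (D p v)) (at 0)"
    by (rule has_vector_derivative_of_real[OF c2])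
  have c4: "((\<lambda>t. \<gamma> t $ j) has_vector_derivative v $ j) (at 0)"
    by (rule bounded_linear.has_vector_derivative[OF bounded_linear_vec_nth gv])
  have c5: "((\<lambda>t. complex_of_real (\<phi> (\<gamma> t)) * \<gamma> t $ j) has_vector_derivative
      complex_of_real (\<phi> (\<gamma> 0)) * v $ j + complex_of_real (D p v) * \<gamma> 0 $ j) (at 0)"
    by (rule has_vector_derivative_mult[OF c3 c4])
  have e: "(\<lambda>t. (Gm a \<circ> \<gamma>) t $ j) = (\<lambda>t. complex_of_real (\<phi> (\<gamma> t)) * \<gamma> t $ j)"
    unfolding \<phi>_def Gm_def by simp
  have c6: "((\<lambda>t. (Gm a \<circ> \<gamma>) t $ j) has_vector_derivative w $ j) (at 0)"
    by (rule bounded_linear.has_vector_derivative[OF bounded_linear_vec_nth gw])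
  have "w $ j = complex_of_real (\<phi> (\<gamma> 0)) * v $ j + complex_of_real (D p v) * \<gamma> 0 $ j"
    using vector_derivative_unique_at[OF c6] c5 unfolding e by blast
  then show ?thesis unfolding g0 \<phi>_def by blast
qed

lemma lam_val:
  fixes a :: "real^'n"
  assumes a: "\<forall>j. a $ j > 0" and p: "p \<in> ellipsoid_boundary a"
    and g0: "\<gamma> 0 = p" and gv: "(\<gamma> has_vector_derivative v) (at 0)"
    and gw: "((Gm a \<circ> \<gamma>) has_vector_derivative w) (at 0)"
  shows "lambda_std (Gm a p) w = Mp a p v / (2 * pi * SS a p)"
proof -
  have p0: "p \<noteq> 0" using p zero_notin by metis
  have s: "SS a p > 0" by (rule SS_pos[OF a p0])
  have trm: "Re (Gm a p $ j) * Im (w $ j) - Im (Gm a p $ j) * Re (w $ j)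
      = (Re (p $ j) * Im (v $ j) - Im (p $ j) * Re (v $ j)) / a $ j / (pi * SS a p)" for j
  proof -
    have aj: "a $ j > 0" using a by blast
    define c where "c = (pi * a $ j * SS a p) powr (-1/2)"
    have X: "pi * a $ j * SS a p > 0" using aj s by simp
    have c2: "c\<^sup>2 = 1 / (pi * a $ j * SS a p)" unfolding c_def by (rule pw1[OF X])
    obtain d where d: "w $ j = complex_of_real c * v $ j + complex_of_real d * p $ j"
      using w_comp[OF a p g0 gv gw, of j] unfolding c_def by blast
    have G: "Gm a p $ j = complex_of_real c * p $ j" unfolding Gm_def c_def by simp
    have "Re (Gm a p $ j) * Im (w $ j) - Im (Gm a p $ j) * Re (w $ j)
        = c\<^sup>2 * (Re (p $ j) * Im (v $ j) - Im (p $ j) * Re (v $ j))"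
      unfolding G d by (simp add: algebra_simps power2_eq_square)
    also have "\<dots> = (Re (p $ j) * Im (v $ j) - Im (p $ j) * Re (v $ j)) / a $ j / (pi * SS a p)"
      unfolding c2 using aj s by (simp add: field_simps)
    finally show ?thesis .
  qed
  have "lambda_std (Gm a p) w = 1/2 * (\<Sum>j\<in>UNIV. (Re (p $ j) * Im (v $ j) - Im (p $ j) * Re (v $ j)) / a $ j / (pi * SS a p))"
    unfolding lambda_std_def trm ..
  also have "\<dots> = 1/2 * (Mp a p v / (pi * SS a p))"
    unfolding Mp_def sum_divide_distrib ..
  also have "\<dots> = Mp a p v / (2 * pi * SS a p)" by simp
  finally show ?thesis .
qed

lemma Mp_lin: "Mp a p (x + c *\<^sub>R y) = Mp a p x + c * Mp a p y"
  unfolding Mp_def sum_distrib_left sum.distrib[symmetric]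
  by (rule sum.cong[OF refl]) (simp add: algebra_simps diff_divide_distrib add_divide_distrib)

lemma Np_iZ: "Np a p (cx_i (Zfield a p)) = 0"
  unfolding Np_def cx_i_def Zfield_def by (simp add: algebra_simps)

lemma Mp_iZ:
  fixes a :: "real^'n"
  assumes a: "\<forall>j. a $ j > 0"
  shows "Mp a p (cx_i (Zfield a p)) = 2 * pi * SS a p"
  unfolding Mp_def SS_def sum_distrib_left
proof (rule sum.cong[OF refl])
  fix j
  have aj: "a $ j > 0" using a by blast
  show "(Re (p $ j) * Im (cx_i (Zfield a p) $ j) - Im (p $ j) * Re (cx_i (Zfield a p) $ j)) / a $ j =
        2 * pi * ((cmod (p $ j))\<^sup>2 * (1 / (a $ j)\<^sup>2))"
    unfolding cx_i_def Zfield_def cmod_power2 using aj by (simp add: field_simps power2_eq_square)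
qed

lemma Np_rot: "Np a p (\<chi> j. - \<i> * u $ j) = Mp a p u"
  unfolding Np_def Mp_def by (rule sum.cong[OF refl]) (simp add: algebra_simps)

lemma beta_val:
  fixes a :: "real^'n" and \<beta> :: "complex ^ 'n \<Rightarrow> complex ^ 'n \<Rightarrow> real"
  assumes a_pos: "\<forall>j. a $ j > 0"
    and beta_linear: "\<forall>p\<in>ellipsoid_boundary a.
          linear_on_subspace (tangent_space (ellipsoid_boundary a) p) (\<beta> p)"
    and beta_ker: "\<forall>p\<in>ellipsoid_boundary a.
          {v\<in>tangent_space (ellipsoid_boundary a) p. \<beta> p v = 0}
          = tangent_space (ellipsoid_boundary a) p \<inter>
            cx_i ` tangent_space (ellipsoid_boundary a) p"
    and beta_iZ: "\<forall>p\<in>ellipsoid_boundary a. \<beta> p (cx_i (Zfield a p)) = 1"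
    and p: "p \<in> ellipsoid_boundary a" and vT: "v \<in> tangent_space (ellipsoid_boundary a) p"
    and Nv: "Np a p v = 0"
  shows "\<beta> p v = Mp a p v / (2 * pi * SS a p)"
proof -
  let ?T = "tangent_space (ellipsoid_boundary a) p"
  define iZ where "iZ = cx_i (Zfield a p)"
  have p0: "p \<noteq> 0" using p zero_notin by metis
  have s: "SS a p > 0" by (rule SS_pos[OF a_pos p0])
  have MiZ: "Mp a p iZ = 2 * pi * SS a p" unfolding iZ_def by (rule Mp_iZ[OF a_pos])
  have MiZ0: "Mp a p iZ \<noteq> 0" using MiZ s by simp
  define c where "c = Mp a p v / Mp a p iZ"
  define u where "u = v + (- c) *\<^sub>R iZ"
  have NiZ: "Np a p iZ = 0" unfolding iZ_def by (rule Np_iZ)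
  have iZT: "iZ \<in> ?T" by (rule T2[OF a_pos p NiZ])
  have Nu: "Np a p u = 0" unfolding u_def Np_lin Nv NiZ by simp
  have uT: "u \<in> ?T" by (rule T2[OF a_pos p Nu])
  have Mu: "Mp a p u = 0" unfolding u_def Mp_lin c_def using MiZ0 by simp
  define y where "y = (\<chi> j. - \<i> * u $ j)"
  have Ny: "Np a p y = 0" unfolding y_def Np_rot Mu ..
  have yT: "y \<in> ?T" by (rule T2[OF a_pos p Ny])
  have cy: "cx_i y = u" unfolding cx_i_def y_def by (simp add: vec_eq_iff)
  have "u \<in> ?T \<inter> cx_i ` ?T" using uT yT cy by blast
  then have bu: "\<beta> p u = 0" using beta_ker p by blast
  have NcZ: "Np a p (c *\<^sub>R iZ) = 0" using Np_lin[of a p 0 c iZ] NiZ by (simp add: Np_zero)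
  have cZT: "c *\<^sub>R iZ \<in> ?T" by (rule T2[OF a_pos p NcZ])
  have L: "linear_on_subspace ?T (\<beta> p)" using beta_linear p by blast
  have "v = u + c *\<^sub>R iZ" unfolding u_def by simp
  then have "\<beta> p v = \<beta> p u + \<beta> p (c *\<^sub>R iZ)" using L uT cZT unfolding linear_on_subspace_def by simp
  also have "\<dots> = c * \<beta> p iZ" using L iZT bu unfolding linear_on_subspace_def by simp
  also have "\<dots> = c" using beta_iZ p unfolding iZ_def by simp
  finally show ?thesis unfolding c_def MiZ .
qed

theorem mainTheorem8:
  fixes a :: "real ^ 'n" and \<beta> :: "complex ^ 'n \<Rightarrow> complex ^ 'n \<Rightarrow> real"
  assumes a_pos: "\<forall>j. a $ j > 0"
    and beta_linear: "\<forall>p\<in>ellipsoid_boundary a.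
          linear_on_subspace (tangent_space (ellipsoid_boundary a) p) (\<beta> p)"
    and beta_ker: "\<forall>p\<in>ellipsoid_boundary a.
          {v\<in>tangent_space (ellipsoid_boundary a) p. \<beta> p v = 0}
          = tangent_space (ellipsoid_boundary a) p \<inter>
            cx_i ` tangent_space (ellipsoid_boundary a) p"
    and beta_iZ: "\<forall>p\<in>ellipsoid_boundary a. \<beta> p (cx_i (Zfield a p)) = 1"
  shows "\<exists>G. diffeo_on (ellipsoid_boundary a) G \<and>
           (\<forall>p\<in>ellipsoid_boundary a. \<forall>\<gamma> v w.
              (\<forall>t. \<gamma> t \<in> ellipsoid_boundary a) \<and> \<gamma> 0 = p \<and>
              (\<gamma> has_vector_derivative v) (at 0) \<and>
              ((G \<circ> \<gamma>) has_vector_derivative w) (at 0)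
              \<longrightarrow> lambda_std (G p) w = \<beta> p v)"
proof (rule exI[of _ "Gm a"], intro conjI ballI allI impI)
  show "diffeo_on (ellipsoid_boundary a) (Gm a)" by (rule G_diffeo[OF a_pos])
next
  fix p \<gamma> v w
  assume p: "p \<in> ellipsoid_boundary a"
    and H: "(\<forall>t. \<gamma> t \<in> ellipsoid_boundary a) \<and> \<gamma> 0 = p \<and>
              (\<gamma> has_vector_derivative v) (at 0) \<and>
              ((Gm a \<circ> \<gamma>) has_vector_derivative w) (at 0)"
  have g: "\<forall>t. \<gamma> t \<in> ellipsoid_boundary a" and g0: "\<gamma> 0 = p"
    and gv: "(\<gamma> has_vector_derivative v) (at 0)" and gw: "((Gm a \<circ> \<gamma>) has_vector_derivative w) (at 0)"
    using H by auto
  have vT: "v \<in> tangent_space (ellipsoid_boundary a) p"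
    unfolding tangent_space_def using g g0 gv by blast
  have Nv: "Np a p v = 0" by (rule T1[OF g g0 gv])
  show "lambda_std (Gm a p) w = \<beta> p v"
    unfolding lam_val[OF a_pos p g0 gv gw] beta_val[OF a_pos beta_linear beta_ker beta_iZ p vT Nv] ..
qed

end
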